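(* Consider the procedures $\mathrm{Solve}_\mathsf{E}$ and $\mathrm{Solve}_\mathsf{O}$ defined in the context (Algorithm 2). Let $G$ be a subgame, $p_\mathsf{E},p_\mathsf{O}$ positive integers, and $d$ a nonnegative integer not smaller than the maximal priority in $G$. If $d$ is even, the set returned by $\mathrm{Solve}_\mathsf{E}(G,d,p_\mathsf{E},p_\mathsf{O})$ (i) contains every dominion of Even in $G$ of size at most $p_\mathsf{E}$, and (ii) is disjoint from every dominion of Odd in $G$ of size at most $p_\mathsf{O}$. If $d$ is odd, the set returned by $\mathrm{Solve}_\mathsf{O}(G,d,p_\mathsf{O},p_\mathsf{E})$ (i) contains every dominion of Odd in $G$ of size at most $p_\mathsf{O}$, and (ii) is disjoint from every dominion of Even in $G$ of size at most $p_\mathsf{E}$. (In particular, all loops in the procedures terminate.)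
   Context: A parity game is $\mathcal{G}=(V,V_\mathsf{E},E,\pi)$: $(V,E)$ a finite directed graph without self-loops, every vertex having a successor; $\pi\colon V\to\{1,\dots,d\}$ positive priorities; $V_\mathsf{E}$ Even's vertices, $V_\mathsf{O}=V\setminus V_\mathsf{E}$ Odd's vertices. A play is won by Even iff the highest priority seen infinitely often is even, else by Odd. A subgame is given by $G\subseteq V$ in which every vertex has a successor in $G$. A dominion of player $\wp$ in $G$ is $D\subseteq G$ such that from every $v\in D$, $\wp$ has a winning strategy in $G$ agreeing only with plays staying forever in $D$. $\mathrm{Attr}_\wp(S,G)$ is the set of vertices from which $\wp$ has a strategy in $G$ agreeing only with plays reaching $S$. Algorithm 2. $\mathrm{Solve}_\mathsf{E}(G,d,p_\mathsf{E},p_\mathsf{O})$ (for even $d$): if $G=\emptyset$ or $p_\mathsf{E}\le 1$, return $\emptyset$. Otherwise: repeat $\{N_d:=\{v\in G:\pi(v)=d\}$; $H:=G\setminus\mathrm{Attr}_\mathsf{E}(N_d,G)$; $W_\mathsf{O}:=\mathrm{Solve}_\mathsf{O}(H,d-1,\lfloor p_\mathsf{O}/2\rfloor,p_\mathsf{E})$; $G:=G\setminus\mathrm{Attr}_\mathsf{O}(W_\mathsf{O},G)\}$ until $W_\mathsf{O}=\emptyset$. Then (with $H$ from the last repeat iteration) $W_\mathsf{O}:=\mathrm{Solve}_\mathsf{O}(H,d-1,p_\mathsf{O},p_\mathsf{E})$; $G:=G\setminus\mathrm{Attr}_\mathsf{O}(W_\mathsf{O},G)$. Then while $W_\mathsf{O}\ne\emptyset$: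 $\{N_d:=\{v\in G:\pi(v)=d\}$; $H:=G\setminus\mathrm{Attr}_\mathsf{E}(N_d,G)$; $W_\mathsf{O}:=\mathrm{Solve}_\mathsf{O}(H,d-1,\lfloor p_\mathsf{O}/2\rfloor,p_\mathsf{E})$; $G:=G\setminus\mathrm{Attr}_\mathsf{O}(W_\mathsf{O},G)\}$. Return $G$. $\mathrm{Solve}_\mathsf{O}(G,d,p_\mathsf{O},p_\mathsf{E})$ (for odd $d$) is the dual, obtained by swapping the roles of Even and Odd: it returns $\emptyset$ if $G=\emptyset$ or $p_\mathsf{O}\le 1$; otherwise it uses $H:=G\setminus\mathrm{Attr}_\mathsf{O}(N_d,G)$, $W_\mathsf{E}:=\mathrm{Solve}_\mathsf{E}(H,d-1,\lfloor p_\mathsf{E}/2\rfloor,p_\mathsf{O})$ in both loops, $W_\mathsf{E}:=\mathrm{Solve}_\mathsf{E}(H,d-1,p_\mathsf{E},p_\mathsf{O})$ in the middle step, and updates $G:=G\setminus\mathrm{Attr}_\mathsf{E}(W_\mathsf{E},G)$. *)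

theory Defs
  imports Main
begin

datatype player = Even | Odd

fun opp :: "player \<Rightarrow> player" where
  "opp Even = Odd" | "opp Odd = Even"

definition parity_game :: "'v set \<Rightarrow> 'v set \<Rightarrow> ('v \<times> 'v) set \<Rightarrow> ('v \<Rightarrow> nat) \<Rightarrow> bool" where
  "parity_game V VE E pr \<longleftrightarrow> finite V \<and> VE \<subseteq> V \<and> E \<subseteq> V \<times> V
     \<and> (\<forall>v. (v, v) \<notin> E) \<and> (\<forall>v\<in>V. \<exists>w. (v, w) \<in> E) \<and> (\<forall>v\<in>V. 1 \<le> pr v)"

definition subgame :: "'v set \<Rightarrow> ('v \<times> 'v) set \<Rightarrow> 'v set \<Rightarrow> bool" where
  "subgame V E G \<longleftrightarrow> G \<subseteq> V \<and> (\<forall>v\<in>G. \<exists>w\<in>G. (v, w) \<in> E)"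

fun owns :: "'v set \<Rightarrow> player \<Rightarrow> 'v \<Rightarrow> bool" where
  "owns VE Even v = (v \<in> VE)" | "owns VE Odd v = (v \<notin> VE)"

definition play_in :: "('v \<times> 'v) set \<Rightarrow> 'v set \<Rightarrow> (nat \<Rightarrow> 'v) \<Rightarrow> bool" where
  "play_in E G \<rho> \<longleftrightarrow> (\<forall>i. \<rho> i \<in> G \<and> (\<rho> i, \<rho> (Suc i)) \<in> E)"

definition strategy_in :: "'v set \<Rightarrow> ('v \<times> 'v) set \<Rightarrow> player \<Rightarrow> 'v set \<Rightarrow> ('v list \<Rightarrow> 'v) \<Rightarrow> bool" where
  "strategy_in VE E P G \<sigma> \<longleftrightarrow>
     (\<forall>h. h \<noteq> [] \<and> last h \<in> G \<and> owns VE P (last h) \<longrightarrow> \<sigma> h \<in> G \<and> (last h, \<sigma> h) \<in> E)"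

definition agrees :: "'v set \<Rightarrow> player \<Rightarrow> ('v list \<Rightarrow> 'v) \<Rightarrow> (nat \<Rightarrow> 'v) \<Rightarrow> bool" where
  "agrees VE P \<sigma> \<rho> \<longleftrightarrow> (\<forall>i. owns VE P (\<rho> i) \<longrightarrow> \<rho> (Suc i) = \<sigma> (map \<rho> [0..<Suc i]))"

definition wins :: "('v \<Rightarrow> nat) \<Rightarrow> player \<Rightarrow> (nat \<Rightarrow> 'v) \<Rightarrow> bool" where
  "wins pr P \<rho> \<longleftrightarrow> (\<exists>p. infinite {i. pr (\<rho> i) = p}
      \<and> (\<forall>q. infinite {i. pr (\<rho> i) = q} \<longrightarrow> q \<le> p) \<and> (even p \<longleftrightarrow> P = Even))"

definition attr :: "'v set \<Rightarrow> ('v \<times> 'v) set \<Rightarrow> player \<Rightarrow> 'v set \<Rightarrow> 'v set \<Rightarrow> 'v set" where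
  "attr VE E P S G = {v \<in> G. \<exists>\<sigma>. strategy_in VE E P G \<sigma> \<and>
      (\<forall>\<rho>. play_in E G \<rho> \<and> \<rho> 0 = v \<and> agrees VE P \<sigma> \<rho> \<longrightarrow> (\<exists>i. \<rho> i \<in> S))}"

definition dominion :: "'v set \<Rightarrow> ('v \<times> 'v) set \<Rightarrow> ('v \<Rightarrow> nat) \<Rightarrow> player \<Rightarrow> 'v set \<Rightarrow> 'v set \<Rightarrow> bool" where
  "dominion VE E pr P G D \<longleftrightarrow> D \<subseteq> G \<and> (\<forall>v\<in>D. \<exists>\<sigma>. strategy_in VE E P G \<sigma> \<and>
      (\<forall>\<rho>. play_in E G \<rho> \<and> \<rho> 0 = v \<and> agrees VE P \<sigma> \<rho> \<longrightarrow> (\<forall>i. \<rho> i \<in> D) \<and> wins pr P \<rho>))"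

definition subH :: "'v set \<Rightarrow> ('v \<times> 'v) set \<Rightarrow> ('v \<Rightarrow> nat) \<Rightarrow> player \<Rightarrow> 'v set \<Rightarrow> nat \<Rightarrow> 'v set" where
  "subH VE E pr P G d = G - attr VE E P {v \<in> G. pr v = d} G"

text \<open>Big-step semantics of Algorithm 2, uniformly for both players:
  solve P G d p q R  means that Solve_P(G, d, p, q) terminates and returns R,
  where p is P's own size bound and q the opponent's (so Solve_E(G,d,pE,pO) is
  solve Even G d pE pO and Solve_O(G,d,pO,pE) is solve Odd G d pO pE).
  loopA describes the repeat-until loop (final value of G),
  loopB the final while loop (current G, current W, returned set).\<close>
inductive solve :: "'v set \<Rightarrow> ('v \<times> 'v) set \<Rightarrow> ('v \<Rightarrow> nat) \<Rightarrow> player \<Rightarrow> 'v set \<Rightarrow> nat \<Rightarrow> nat \<Rightarrow> nat \<Rightarrow> 'v set \<Rightarrow> bool"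
  and loopA :: "'v set \<Rightarrow> ('v \<times> 'v) set \<Rightarrow> ('v \<Rightarrow> nat) \<Rightarrow> player \<Rightarrow> nat \<Rightarrow> nat \<Rightarrow> nat \<Rightarrow> 'v set \<Rightarrow> 'v set \<Rightarrow> bool"
  and loopB :: "'v set \<Rightarrow> ('v \<times> 'v) set \<Rightarrow> ('v \<Rightarrow> nat) \<Rightarrow> player \<Rightarrow> nat \<Rightarrow> nat \<Rightarrow> nat \<Rightarrow> 'v set \<Rightarrow> 'v set \<Rightarrow> 'v set \<Rightarrow> bool"
  for VE E pr
where
  solve_base: "G = {} \<or> p \<le> 1 \<Longrightarrow> solve VE E pr P G d p q {}"
| solve_main: "\<lbrakk> G \<noteq> {}; 1 < p;
     loopA VE E pr P d p q G G1;
     solve VE E pr (opp P) (subH VE E pr P G1 d) (d - 1) q p W;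
     loopB VE E pr P d p q (G1 - attr VE E (opp P) W G1) W R \<rbrakk>
   \<Longrightarrow> solve VE E pr P G d p q R"
| loopA_stop: "solve VE E pr (opp P) (subH VE E pr P G d) (d - 1) (q div 2) p {}
   \<Longrightarrow> loopA VE E pr P d p q G G"
| loopA_step: "\<lbrakk> solve VE E pr (opp P) (subH VE E pr P G d) (d - 1) (q div 2) p W; W \<noteq> {};
     loopA VE E pr P d p q (G - attr VE E (opp P) W G) G' \<rbrakk>
   \<Longrightarrow> loopA VE E pr P d p q G G'"
| loopB_stop: "loopB VE E pr P d p q G {} G"
| loopB_step: "\<lbrakk> W \<noteq> {};
     solve VE E pr (opp P) (subH VE E pr P G d) (d - 1) (q div 2) p W';
     loopB VE E pr P d p q (G - attr VE E (opp P) W' G) W' R \<rbrakk>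
   \<Longrightarrow> loopB VE E pr P d p q G W R"

end

theory Submission imports Defs begin

lemma owns_opp[simp]: "owns VE (opp P) v \<longleftrightarrow> \<not> owns VE P v"
  by (cases P) auto

lemma opp_neq[simp]: "opp P \<noteq> P" by (cases P) auto
lemma opp_opp[simp]: "opp (opp P) = P" by (cases P) auto

locale pg =
  fixes V VE :: "'v set" and E :: "('v \<times> 'v) set" and pr :: "'v \<Rightarrow> nat"
  assumes pgame: "parity_game V VE E pr"
begin

definition anysucc :: "'v set \<Rightarrow> 'v \<Rightarrow> 'v" where
  "anysucc G x = (SOME w. w \<in> G \<and> (x, w) \<in> E)"

lemma anysucc: "subgame V E G \<Longrightarrow> x \<in> G \<Longrightarrow> anysucc G x \<in> G \<and> (x, anysucc G x) \<in> E"
  unfolding anysucc_def subgame_def by (rule someI_ex) blast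

lemma anystrat: "subgame V E G \<Longrightarrow> strategy_in VE E X G (\<lambda>g. anysucc G (last g))"
  unfolding strategy_in_def using anysucc by blast

lemma L0f:
  assumes sg: "subgame V E G" and s: "strategy_in VE E X G \<sigma>" and t: "strategy_in VE E (opp X) G \<tau>"
    and path: "\<forall>k<n. \<psi> k \<in> G \<and> (\<psi> k, \<psi> (Suc k)) \<in> E" and lst: "\<psi> n \<in> G"
  shows "\<exists>\<rho>. play_in E G \<rho> \<and> (\<forall>k\<le>n. \<rho> k = \<psi> k) \<and>
     (\<forall>i\<ge>n. \<rho> (Suc i) = (if owns VE X (\<rho> i) then \<sigma> else \<tau>) (map \<rho> [0..<Suc i]))"
proof -
  define f where "f g = (if owns VE X (last g) then \<sigma> g else \<tau> g)" for g
  have fG: "g \<noteq> [] \<Longrightarrow> last g \<in> G \<Longrightarrow> f g \<in> G \<and> (last g, f g) \<in> E" for g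
    using s t unfolding f_def strategy_in_def by auto
  define ext where "ext = rec_nat (map \<psi> [0..<Suc n]) (\<lambda>_ g. g @ [f g])"
  have ext0: "ext 0 = map \<psi> [0..<Suc n]" and extS: "ext (Suc m) = ext m @ [f (ext m)]" for m
    by (simp_all add: ext_def)
  have len: "length (ext m) = Suc n + m" for m
    by (induction m) (simp_all add: ext0 extS)
  have pre: "ext m' ! i = ext m ! i" if "m \<le> m'" "i < length (ext m)" for m m' i
    using that(1)
  proof (induction m' rule: dec_induct)
    case base then show ?case by simp
  next
    case (step k)
    have "i < length (ext k)" using that(2) step.hyps(1) len by simp
    then show ?case using step.IH by (simp add: extS nth_append)
  qed
  have inv: "(\<forall>i<length (ext m). ext m ! i \<in> G) \<and> (\<forall>i. Suc i < length (ext m) \<longrightarrow> (ext m ! i, ext m ! Suc i) \<in> E)" for m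
  proof (induction m)
    case 0
    show ?case using path lst
      by (auto simp: ext0 nth_Cons' simp del: upt_Suc) (metis less_Suc_eq_le less_antisym)+
  next
    case (Suc m)
    have ne: "ext m \<noteq> []" using len[of m] by auto
    have lm: "last (ext m) = ext m ! (Suc n + m - 1)" using ne len[of m] by (simp add: last_conv_nth)
    have lG: "last (ext m) \<in> G" using Suc.IH lm len[of m] by auto
    note fm = fG[OF ne lG]
    show ?case
    proof (intro conjI allI impI)
      fix i assume "i < length (ext (Suc m))"
      then show "ext (Suc m) ! i \<in> G" using Suc.IH fm len[of m]
        by (auto simp: extS nth_append less_Suc_eq)
    next
      fix i assume a: "Suc i < length (ext (Suc m))"
      show "(ext (Suc m) ! i, ext (Suc m) ! Suc i) \<in> E"
      proof (cases "Suc i < length (ext m)")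
        case True then show ?thesis using Suc.IH by (simp add: extS nth_append)
      next
        case False
        then have "Suc i = length (ext m)" using a len by (simp add: extS)
        then show ?thesis using fm lm len[of m] by (simp add: extS nth_append)
      qed
    qed
  qed
  define \<rho> where "\<rho> i = ext i ! i" for i
  have \<rho>eq: "\<rho> i = ext m ! i" if "i < length (ext m)" for i m
  proof (cases "m \<le> i")
    case True then show ?thesis using pre[of m i i] that by (simp add: \<rho>_def)
  next
    case False then show ?thesis using pre[of i m i] len by (simp add: \<rho>_def)
  qed
  have "play_in E G \<rho>"
    unfolding play_in_def
  proof
    fix i
    have "\<rho> i = ext (Suc i) ! i" "\<rho> (Suc i) = ext (Suc i) ! Suc i" using \<rho>eq len by auto
    then show "\<rho> i \<in> G \<and> (\<rho> i, \<rho> (Suc i)) \<in> E" using inv[of "Suc i"] len by auto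
  qed
  moreover have "\<forall>k\<le>n. \<rho> k = \<psi> k"
  proof (intro allI impI)
    fix k assume "k \<le> n"
    then have "\<rho> k = ext 0 ! k" using \<rho>eq len by simp
    then show "\<rho> k = \<psi> k" using \<open>k \<le> n\<close> by (simp add: ext0 nth_map_upt del: upt_Suc)
  qed
  moreover have "\<forall>i\<ge>n. \<rho> (Suc i) = (if owns VE X (\<rho> i) then \<sigma> else \<tau>) (map \<rho> [0..<Suc i])"
  proof (intro allI impI)
    fix i assume "n \<le> i"
    define m where "m = i - n"
    have lm: "length (ext m) = Suc i" using len \<open>n \<le> i\<close> by (simp add: m_def)
    have mp: "map \<rho> [0..<Suc i] = ext m"
      by (rule nth_equalityI) (simp_all add: lm \<rho>eq nth_map_upt del: upt_Suc)
    have "\<rho> (Suc i) = ext (Suc m) ! Suc i" using \<rho>eq len lm by simp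
    also have "\<dots> = f (ext m)" using lm by (simp add: extS nth_append)
    finally have 1: "\<rho> (Suc i) = f (ext m)" .
    have "last (ext m) = \<rho> i" using lm \<rho>eq by (metis diff_Suc_1 last_conv_nth lessI list.size(3) nat.distinct(1))
    then show "\<rho> (Suc i) = (if owns VE X (\<rho> i) then \<sigma> else \<tau>) (map \<rho> [0..<Suc i])"
      using 1 mp by (simp add: f_def)
  qed
  ultimately show ?thesis by blast
qed


lemma L0a:
  assumes sg: "subgame V E G" and s: "strategy_in VE E X G \<sigma>"
    and path: "\<forall>k<n. \<psi> k \<in> G \<and> (\<psi> k, \<psi> (Suc k)) \<in> E" and lst: "\<psi> n \<in> G"
    and cons: "\<forall>k<n. owns VE X (\<psi> k) \<longrightarrow> \<psi> (Suc k) = \<sigma> (map \<psi> [0..<Suc k])"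
  shows "\<exists>\<rho>. play_in E G \<rho> \<and> (\<forall>k\<le>n. \<rho> k = \<psi> k) \<and> agrees VE X \<sigma> \<rho>"
proof -
  obtain \<rho> where p: "play_in E G \<rho>" and pre: "\<forall>k\<le>n. \<rho> k = \<psi> k"
    and st: "\<forall>i\<ge>n. \<rho> (Suc i) = (if owns VE X (\<rho> i) then \<sigma> else (\<lambda>g. anysucc G (last g))) (map \<rho> [0..<Suc i])"
    using L0f[OF sg s anystrat[OF sg] path lst] by blast
  have "agrees VE X \<sigma> \<rho>"
    unfolding agrees_def
  proof (intro allI impI)
    fix i assume o: "owns VE X (\<rho> i)"
    show "\<rho> (Suc i) = \<sigma> (map \<rho> [0..<Suc i])"
    proof (cases "n \<le> i")
      case True then show ?thesis using st o by auto
    next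
      case False
      have me: "map \<rho> [0..<Suc i] = map \<psi> [0..<Suc i]" using pre False by (intro map_cong) auto
      have e1: "\<rho> (Suc i) = \<psi> (Suc i)" using pre False by simp
      have e2: "owns VE X (\<psi> i)" using o pre False by simp
      have "\<psi> (Suc i) = \<sigma> (map \<psi> [0..<Suc i])" using cons e2 False by (simp del: upt_Suc)
      then show ?thesis using e1 me by metis
    qed
  qed
  then show ?thesis using p pre by blast
qed

lemma play_from:
  assumes sg: "subgame V E G" and s: "strategy_in VE E X G \<sigma>" and v: "v \<in> G"
  shows "\<exists>\<rho>. play_in E G \<rho> \<and> \<rho> 0 = v \<and> agrees VE X \<sigma> \<rho>"
  using L0a[OF sg s, of 0 "\<lambda>_. v"] v by auto

lemma play_from2:
  assumes sg: "subgame V E G" and s: "strategy_in VE E X G \<sigma>" and t: "strategy_in VE E (opp X) G \<tau>"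
    and v: "v \<in> G"
  shows "\<exists>\<rho>. play_in E G \<rho> \<and> \<rho> 0 = v \<and> agrees VE X \<sigma> \<rho> \<and> agrees VE (opp X) \<tau> \<rho>"
proof -
  obtain \<rho> where p: "play_in E G \<rho>" and pre: "\<forall>k\<le>0. \<rho> k = v"
    and st: "\<forall>i\<ge>0. \<rho> (Suc i) = (if owns VE X (\<rho> i) then \<sigma> else \<tau>) (map \<rho> [0..<Suc i])"
    using L0f[OF sg s t, of 0 "\<lambda>_. v"] v by auto
  then show ?thesis unfolding agrees_def by auto
qed

lemma attr_sub: "attr VE E X S G \<subseteq> G" by (auto simp: attr_def)

lemma attr_target: assumes sg: "subgame V E G" shows "S \<inter> G \<subseteq> attr VE E X S G"
proof
  fix v assume v: "v \<in> S \<inter> G"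
  have "\<forall>\<rho>. play_in E G \<rho> \<and> \<rho> 0 = v \<and> agrees VE X (\<lambda>g. anysucc G (last g)) \<rho> \<longrightarrow> (\<exists>i. \<rho> i \<in> S)"
    using v by auto
  then show "v \<in> attr VE E X S G" using v anystrat[OF sg] unfolding attr_def by blast
qed

lemma attr_empty: assumes sg: "subgame V E G" shows "attr VE E X {} G = {}"
proof (rule ccontr)
  assume "attr VE E X {} G \<noteq> {}"
  then obtain v \<sigma> where v: "v \<in> G" and s: "strategy_in VE E X G \<sigma>"
    and w: "\<forall>\<rho>. play_in E G \<rho> \<and> \<rho> 0 = v \<and> agrees VE X \<sigma> \<rho> \<longrightarrow> (\<exists>i. \<rho> i \<in> {})"
    unfolding attr_def by blast
  show False using play_from[OF sg s v] w by blast
qed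

lemma attr_pre:
  assumes sg: "subgame V E G" and u: "u \<in> G"
    and c: "(owns VE X u \<and> (\<exists>w\<in>attr VE E X S G. (u,w) \<in> E)) \<or> (\<not> owns VE X u \<and> (\<forall>w\<in>G. (u,w) \<in> E \<longrightarrow> w \<in> attr VE E X S G))"
  shows "u \<in> attr VE E X S G"
proof -
  let ?A = "attr VE E X S G"
  have "\<forall>w\<in>?A. \<exists>\<sigma>. strategy_in VE E X G \<sigma> \<and> (\<forall>\<rho>. play_in E G \<rho> \<and> \<rho> 0 = w \<and> agrees VE X \<sigma> \<rho> \<longrightarrow> (\<exists>i. \<rho> i \<in> S))"
    by (auto simp: attr_def)
  then obtain f where f: "\<And>w. w \<in> ?A \<Longrightarrow> strategy_in VE E X G (f w) \<and> (\<forall>\<rho>. play_in E G \<rho> \<and> \<rho> 0 = w \<and> agrees VE X (f w) \<rho> \<longrightarrow> (\<exists>i. \<rho> i \<in> S))"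
    by metis
  obtain w0 where w0: "owns VE X u \<Longrightarrow> w0 \<in> ?A \<and> (u, w0) \<in> E" using c by blast
  define \<sigma> where "\<sigma> h = (if 2 \<le> length h \<and> h!1 \<in> ?A then f (h!1) (tl h) else if owns VE X u \<and> h = [u] then w0 else anysucc G (last h))" for h
  have strat: "strategy_in VE E X G \<sigma>"
    unfolding strategy_in_def
  proof (intro allI impI)
    fix h assume h: "h \<noteq> [] \<and> last h \<in> G \<and> owns VE X (last h)"
    show "\<sigma> h \<in> G \<and> (last h, \<sigma> h) \<in> E"
    proof (cases "2 \<le> length h \<and> h!1 \<in> ?A")
      case True
      then have "tl h \<noteq> []" "last (tl h) = last h" by (cases h; auto simp: last_tl)+
      then show ?thesis using f[of "h!1"] True h by (auto simp: \<sigma>_def strategy_in_def)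
    next
      case False
      then show ?thesis using h w0 anysucc[OF sg, of "last h"] attr_sub by (auto simp: \<sigma>_def)
    qed
  qed
  have "\<forall>\<rho>. play_in E G \<rho> \<and> \<rho> 0 = u \<and> agrees VE X \<sigma> \<rho> \<longrightarrow> (\<exists>i. \<rho> i \<in> S)"
  proof (intro allI impI)
    fix \<rho> assume a: "play_in E G \<rho> \<and> \<rho> 0 = u \<and> agrees VE X \<sigma> \<rho>"
    have r1: "\<rho> 1 \<in> ?A"
    proof (cases "owns VE X u")
      case True
      then have "\<rho> (Suc 0) = \<sigma> [u]" using a unfolding agrees_def by (metis upt_rec map_upt_Suc list.simps(8) zero_less_Suc upt_0)
      then show ?thesis using True w0 by (simp add: \<sigma>_def)
    next
      case False
      have "\<rho> 1 \<in> G" "(u, \<rho> 1) \<in> E" using a unfolding play_in_def by (metis One_nat_def)+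
      then show ?thesis using c False by blast
    qed
    define \<rho>' where "\<rho>' k = \<rho> (Suc k)" for k
    have "play_in E G \<rho>'" using a by (simp add: play_in_def \<rho>'_def)
    moreover have "\<rho>' 0 = \<rho> 1" by (simp add: \<rho>'_def)
    moreover have "agrees VE X (f (\<rho> 1)) \<rho>'"
      unfolding agrees_def
    proof (intro allI impI)
      fix k assume o: "owns VE X (\<rho>' k)"
      have m: "map \<rho> [0..<Suc (Suc k)] = \<rho> 0 # map \<rho>' [0..<Suc k]"
        unfolding \<rho>'_def by (rule map_upt_Suc)
      have "\<rho>' (Suc k) = \<sigma> (map \<rho> [0..<Suc (Suc k)])"
        using a o unfolding agrees_def \<rho>'_def by blast
      also have "\<dots> = f (\<rho> 1) (map \<rho>' [0..<Suc k])" using r1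
        by (simp only: m) (simp add: \<sigma>_def \<rho>'_def del: upt_Suc)
      finally show "\<rho>' (Suc k) = f (\<rho> 1) (map \<rho>' [0..<Suc k])" .
    qed
    ultimately obtain i where "\<rho>' i \<in> S" using f[OF r1] by blast
    then show "\<exists>i. \<rho> i \<in> S" unfolding \<rho>'_def by blast
  qed
  then show ?thesis using strat u unfolding attr_def by blast
qed


definition closedP :: "player \<Rightarrow> 'v set \<Rightarrow> 'v set \<Rightarrow> bool" where
  "closedP X S T \<longleftrightarrow> T \<subseteq> S \<and> subgame V E T \<and> (\<forall>u\<in>T. owns VE X u \<longrightarrow> (\<forall>w\<in>S. (u,w)\<in>E \<longrightarrow> w\<in>T))"

lemma attr_compl:
  assumes sg: "subgame V E S" shows "closedP X S (S - attr VE E X W S)"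
proof -
  let ?A = "attr VE E X W S" let ?T = "S - ?A"
  have cl: "\<forall>u\<in>?T. owns VE X u \<longrightarrow> (\<forall>w\<in>S. (u,w)\<in>E \<longrightarrow> w\<in>?T)"
    using attr_pre[OF sg] by blast
  have "\<forall>u\<in>?T. \<exists>w\<in>?T. (u,w)\<in>E"
  proof
    fix u assume u: "u \<in> ?T"
    show "\<exists>w\<in>?T. (u,w)\<in>E"
    proof (cases "owns VE X u")
      case True
      obtain w where "w \<in> S" "(u,w) \<in> E" using sg u unfolding subgame_def by blast
      then show ?thesis using cl u True by blast
    next
      case False
      show ?thesis
      proof (rule ccontr)
        assume "\<not> ?thesis"
        then have "\<forall>w\<in>S. (u,w) \<in> E \<longrightarrow> w \<in> ?A" by blast
        then have "u \<in> ?A" using attr_pre[OF sg, of u X W] u False by blast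
        then show False using u by blast
      qed
    qed
  qed
  then show ?thesis using sg cl unfolding closedP_def subgame_def by blast
qed

lemma closedP_refl: "subgame V E S \<Longrightarrow> closedP X S S"
  unfolding closedP_def by blast

lemma closedP_trans: "closedP X S T \<Longrightarrow> closedP X T U \<Longrightarrow> closedP X S U"
  unfolding closedP_def by blast

lemma dom_trap:
  assumes c: "closedP X S T" and dm: "dominion VE E pr X S D"
  shows "dominion VE E pr X T (D \<inter> T)"
  unfolding dominion_def
proof (intro conjI ballI)
  show "D \<inter> T \<subseteq> T" by blast
next
  fix v assume v: "v \<in> D \<inter> T"
  obtain \<sigma> where s: "strategy_in VE E X S \<sigma>"
    and w: "\<forall>\<rho>. play_in E S \<rho> \<and> \<rho> 0 = v \<and> agrees VE X \<sigma> \<rho> \<longrightarrow> (\<forall>i. \<rho> i \<in> D) \<and> wins pr X \<rho>"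
    using dm v unfolding dominion_def by blast
  have "strategy_in VE E X T \<sigma>" using s c unfolding strategy_in_def closedP_def by blast
  moreover have "\<forall>\<rho>. play_in E T \<rho> \<and> \<rho> 0 = v \<and> agrees VE X \<sigma> \<rho> \<longrightarrow> (\<forall>i. \<rho> i \<in> D \<inter> T) \<and> wins pr X \<rho>"
  proof (intro allI impI)
    fix \<rho> assume a: "play_in E T \<rho> \<and> \<rho> 0 = v \<and> agrees VE X \<sigma> \<rho>"
    then have "play_in E S \<rho>" using c unfolding play_in_def closedP_def by blast
    then show "(\<forall>i. \<rho> i \<in> D \<inter> T) \<and> wins pr X \<rho>" using a w unfolding play_in_def by blast
  qed
  ultimately show "\<exists>\<sigma>. strategy_in VE E X T \<sigma> \<and> (\<forall>\<rho>. play_in E T \<rho> \<and> \<rho> 0 = v \<and> agrees VE X \<sigma> \<rho> \<longrightarrow> (\<forall>i. \<rho> i \<in> D \<inter> T) \<and> wins pr X \<rho>)"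
    by blast
qed

lemma infinite_nat_iff_unbounded_le: "infinite (S::nat set) \<longleftrightarrow> (\<forall>m. \<exists>n\<ge>m. n \<in> S)"
proof
  assume a: "infinite S"
  show "\<forall>m. \<exists>n\<ge>m. n \<in> S"
  proof
    fix m show "\<exists>n\<ge>m. n \<in> S"
    proof (rule ccontr)
      assume "\<not> ?thesis"
      then have "\<forall>n\<in>S. n \<le> m" by (meson nat_le_linear)
      then show False using a finite_nat_set_iff_bounded_le by blast
    qed
  qed
next
  assume a: "\<forall>m. \<exists>n\<ge>m. n \<in> S"
  show "infinite S"
  proof
    assume "finite S"
    then obtain m where "\<forall>n\<in>S. n \<le> m" using finite_nat_set_iff_bounded_le by blast
    then show False using a[rule_format, of "Suc m"] by force
  qed
qed

lemma inf_shift: "infinite {i. P (n + i)} \<longleftrightarrow> infinite {i::nat. P i}"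
proof
  assume "infinite {i. P (n + i)}"
  then show "infinite {i::nat. P i}"
    unfolding infinite_nat_iff_unbounded_le by (metis mem_Collect_eq le_add2 order_trans)
next
  assume a: "infinite {i::nat. P i}"
  show "infinite {i. P (n + i)}"
    unfolding infinite_nat_iff_unbounded_le
  proof
    fix m
    obtain j where "j \<ge> n + m" "P j" using a unfolding infinite_nat_iff_unbounded_le by blast
    then show "\<exists>k\<ge>m. k \<in> {i. P (n + i)}" by (intro exI[of _ "j - n"]) auto
  qed
qed

lemma wins_shift: "wins pr X \<psi> \<Longrightarrow> wins pr X (\<lambda>i. \<psi> (n + i))"
  unfolding wins_def using inf_shift[of "\<lambda>i. pr (\<psi> i) = _" n] by simp

lemma not_wins_opp:
  assumes p: "play_in E S \<rho>" and b: "\<forall>v\<in>S. pr v \<le> d" and inf: "infinite {i. pr (\<rho> i) = d}"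
    and par: "even d \<longleftrightarrow> P = Even"
  shows "\<not> wins pr (opp P) \<rho>"
proof
  assume "wins pr (opp P) \<rho>"
  then obtain q where q: "infinite {i. pr (\<rho> i) = q}" "\<forall>r. infinite {i. pr (\<rho> i) = r} \<longrightarrow> r \<le> q"
    "even q \<longleftrightarrow> opp P = Even" unfolding wins_def by blast
  have "d \<le> q" using q(2) inf by blast
  moreover obtain i where "pr (\<rho> i) = q" using q(1) not_finite_existsD by blast
  then have "q \<le> d" using p b unfolding play_in_def by blast
  ultimately have "q = d" by simp
  then show False using q(3) par by (cases P) auto
qed

lemma gen_restrict:
  assumes sgG: "subgame V E G" and sgT: "subgame V E T" and TG: "T \<subseteq> G"
    and s: "strategy_in VE E X G \<sigma>" and p: "play_in E G \<rho>" and ag: "agrees VE X \<sigma> \<rho>"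
    and safe: "\<forall>\<rho>'. play_in E G \<rho>' \<and> agrees VE X \<sigma> \<rho>' \<and> (\<forall>i\<le>n. \<rho>' i = \<rho> i) \<longrightarrow> (\<forall>j\<ge>n. \<rho>' j \<in> T)"
  defines "\<sigma>' \<equiv> \<lambda>g. if \<sigma> (map \<rho> [0..<n] @ g) \<in> T then \<sigma> (map \<rho> [0..<n] @ g) else anysucc T (last g)"
  shows "strategy_in VE E X T \<sigma>'"
    and "\<And>\<pi>. play_in E T \<pi> \<Longrightarrow> \<pi> 0 = \<rho> n \<Longrightarrow> agrees VE X \<sigma>' \<pi> \<Longrightarrow>
          play_in E G (\<lambda>k. if k < n then \<rho> k else \<pi> (k - n)) \<and> agrees VE X \<sigma> (\<lambda>k. if k < n then \<rho> k else \<pi> (k - n))"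
proof -
  show "strategy_in VE E X T \<sigma>'"
    unfolding strategy_in_def
  proof (intro allI impI)
    fix h assume h: "h \<noteq> [] \<and> last h \<in> T \<and> owns VE X (last h)"
    have "last (map \<rho> [0..<n] @ h) = last h" using h by simp
    then have "(last h, \<sigma> (map \<rho> [0..<n] @ h)) \<in> E" using s h TG unfolding strategy_in_def by (metis Nil_is_append_conv subsetD)
    then show "\<sigma>' h \<in> T \<and> (last h, \<sigma>' h) \<in> E" using anysucc[OF sgT, of "last h"] h by (auto simp: \<sigma>'_def)
  qed
next
  fix \<pi> assume pT: "play_in E T \<pi>" and p0: "\<pi> 0 = \<rho> n" and agp: "agrees VE X \<sigma>' \<pi>"
  define \<psi> where "\<psi> k = (if k < n then \<rho> k else \<pi> (k - n))" for k
  have \<psi>le: "\<psi> k = \<rho> k" if "k \<le> n" for k using that p0 by (auto simp: \<psi>_def)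
  have \<psi>ge: "\<psi> (n + i) = \<pi> i" for i by (simp add: \<psi>_def)
  have mp: "map \<psi> [0..<Suc (n+i)] = map \<rho> [0..<n] @ map \<pi> [0..<Suc i]" for i
    by (rule nth_equalityI) (auto simp: nth_append \<psi>_def simp del: upt_Suc)
  have pG: "play_in E G \<psi>"
    unfolding play_in_def
  proof
    fix k
    show "\<psi> k \<in> G \<and> (\<psi> k, \<psi> (Suc k)) \<in> E"
    proof (cases "Suc k < n")
      case True then show ?thesis using p by (simp add: \<psi>_def play_in_def)
    next
      case False
      show ?thesis
      proof (cases "Suc k = n")
        case True
        then show ?thesis using p p0 by (auto simp: \<psi>_def play_in_def)
      next
        case False
        then have "k \<ge> n" "Suc k - n = Suc (k - n)" using \<open>\<not> Suc k < n\<close> by auto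
        then show ?thesis using pT TG by (auto simp: \<psi>_def play_in_def)
      qed
    qed
  qed
  have agpre: "\<psi> (Suc k) = \<sigma> (map \<psi> [0..<Suc k])" if "k < n" "owns VE X (\<psi> k)" for k
  proof -
    have "map \<psi> [0..<Suc k] = map \<rho> [0..<Suc k]" using that \<psi>le by (intro map_cong) auto
    moreover have "\<psi> (Suc k) = \<rho> (Suc k)" "\<psi> k = \<rho> k" using that \<psi>le by auto
    ultimately show ?thesis using ag that unfolding agrees_def by metis
  qed
  have key: "\<forall>i'<i. owns VE X (\<pi> i') \<longrightarrow> \<pi> (Suc i') = \<sigma> (map \<psi> [0..<Suc (n+i')])" for i
  proof (induction i)
    case 0 then show ?case by simp
  next
    case (Suc i)
    have "owns VE X (\<pi> i) \<longrightarrow> \<pi> (Suc i) = \<sigma> (map \<psi> [0..<Suc (n+i)])"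
    proof
      assume o: "owns VE X (\<pi> i)"
      have path: "\<forall>k<n+i. \<psi> k \<in> G \<and> (\<psi> k, \<psi> (Suc k)) \<in> E" and lst: "\<psi> (n+i) \<in> G"
        using pG unfolding play_in_def by auto
      have cons: "\<forall>k<n+i. owns VE X (\<psi> k) \<longrightarrow> \<psi> (Suc k) = \<sigma> (map \<psi> [0..<Suc k])"
      proof (intro allI impI)
        fix k assume k: "k < n + i" and o': "owns VE X (\<psi> k)"
        show "\<psi> (Suc k) = \<sigma> (map \<psi> [0..<Suc k])"
        proof (cases "k < n")
          case True then show ?thesis using agpre o' by blast
        next
          case False
          then obtain i' where i': "k = n + i'" "i' < i" using k by (metis add_diff_inverse_nat nat_add_left_cancel_less)
          then have "owns VE X (\<pi> i')" using o' \<psi>ge by simp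
          then have "\<pi> (Suc i') = \<sigma> (map \<psi> [0..<Suc (n+i')])" using Suc.IH i' by blast
          then show ?thesis using i' \<psi>ge[of "Suc i'"] by simp
        qed
      qed
      obtain \<rho>' where r: "play_in E G \<rho>'" "\<forall>k\<le>n+i. \<rho>' k = \<psi> k" "agrees VE X \<sigma> \<rho>'"
        using L0a[OF sgG s path lst cons] by blast
      have "\<forall>i'\<le>n. \<rho>' i' = \<rho> i'" using r(2) \<psi>le by simp
      then have inT: "\<rho>' (Suc (n+i)) \<in> T" using safe r by auto
      have mr: "map \<rho>' [0..<Suc (n+i)] = map \<psi> [0..<Suc (n+i)]" using r(2) by (intro map_cong) auto
      have "owns VE X (\<rho>' (n+i))" using r(2) \<psi>ge o by simp
      then have "\<rho>' (Suc (n+i)) = \<sigma> (map \<psi> [0..<Suc (n+i)])" using r(3) mr unfolding agrees_def by metis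
      then have inT': "\<sigma> (map \<rho> [0..<n] @ map \<pi> [0..<Suc i]) \<in> T" using inT mp by simp
      have "\<pi> (Suc i) = \<sigma>' (map \<pi> [0..<Suc i])" using agp o unfolding agrees_def by blast
      also have "\<dots> = \<sigma> (map \<psi> [0..<Suc (n+i)])" using inT' mp by (simp add: \<sigma>'_def del: upt_Suc)
      finally show "\<pi> (Suc i) = \<sigma> (map \<psi> [0..<Suc (n+i)])" .
    qed
    then show ?case using Suc.IH less_Suc_eq by auto
  qed
  have "agrees VE X \<sigma> \<psi>"
    unfolding agrees_def
  proof (intro allI impI)
    fix k assume o: "owns VE X (\<psi> k)"
    show "\<psi> (Suc k) = \<sigma> (map \<psi> [0..<Suc k])"
    proof (cases "k < n")
      case True then show ?thesis using agpre o by blast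
    next
      case False
      then obtain i where i: "k = n + i" by (metis le_add_diff_inverse not_less)
      then have "owns VE X (\<pi> i)" using o \<psi>ge by simp
      then have "\<pi> (Suc i) = \<sigma> (map \<psi> [0..<Suc (n+i)])" using key[of "Suc i"] by blast
      then show ?thesis using i \<psi>ge[of "Suc i"] by simp
    qed
  qed
  then show "play_in E G (\<lambda>k. if k < n then \<rho> k else \<pi> (k - n)) \<and> agrees VE X \<sigma> (\<lambda>k. if k < n then \<rho> k else \<pi> (k - n))"
    using pG unfolding \<psi>_def[abs_def] by simp
qed

lemma dom_sub:
  assumes sgG: "subgame V E G" and sgT: "subgame V E T" and TG: "T \<subseteq> G"
    and dm: "dominion VE E pr X G D" and DT: "D \<subseteq> T"
  shows "dominion VE E pr X T D"
  unfolding dominion_def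
proof (intro conjI ballI)
  show "D \<subseteq> T" by fact
next
  fix v assume v: "v \<in> D"
  obtain \<sigma> where s: "strategy_in VE E X G \<sigma>"
    and w: "\<forall>\<rho>. play_in E G \<rho> \<and> \<rho> 0 = v \<and> agrees VE X \<sigma> \<rho> \<longrightarrow> (\<forall>i. \<rho> i \<in> D) \<and> wins pr X \<rho>"
    using dm v unfolding dominion_def by blast
  have vG: "v \<in> G" using dm v unfolding dominion_def by blast
  obtain \<rho> where r: "play_in E G \<rho>" "\<rho> 0 = v" "agrees VE X \<sigma> \<rho>" using play_from[OF sgG s vG] by blast
  have safe: "\<forall>\<rho>'. play_in E G \<rho>' \<and> agrees VE X \<sigma> \<rho>' \<and> (\<forall>i\<le>0. \<rho>' i = \<rho> i) \<longrightarrow> (\<forall>j\<ge>0. \<rho>' j \<in> T)"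
    using w r(2) DT by auto
  note gr = gen_restrict[OF sgG sgT TG s r(1) r(3) safe]
  show "\<exists>\<sigma>. strategy_in VE E X T \<sigma> \<and> (\<forall>\<rho>. play_in E T \<rho> \<and> \<rho> 0 = v \<and> agrees VE X \<sigma> \<rho> \<longrightarrow> (\<forall>i. \<rho> i \<in> D) \<and> wins pr X \<rho>)"
  proof (rule exI, rule conjI[OF gr(1)], intro allI impI)
    fix \<pi> assume a: "play_in E T \<pi> \<and> \<pi> 0 = v \<and> agrees VE X (\<lambda>g. if \<sigma> (map \<rho> [0..<0] @ g) \<in> T then \<sigma> (map \<rho> [0..<0] @ g) else anysucc T (last g)) \<pi>"
    then have "play_in E G \<pi> \<and> agrees VE X \<sigma> \<pi>" using gr(2)[of \<pi>] r(2) by simp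
    then show "(\<forall>i. \<pi> i \<in> D) \<and> wins pr X \<pi>" using w a by blast
  qed
qed

lemma attr_disjoint:
  assumes sg: "subgame V E G" and dm: "dominion VE E pr X G D" and WD: "W \<inter> D = {}"
  shows "attr VE E (opp X) W G \<inter> D = {}"
proof (rule ccontr)
  assume "\<not> ?thesis"
  then obtain v where v: "v \<in> D" "v \<in> attr VE E (opp X) W G" by blast
  obtain \<sigma> where s: "strategy_in VE E X G \<sigma>"
    and w: "\<forall>\<rho>. play_in E G \<rho> \<and> \<rho> 0 = v \<and> agrees VE X \<sigma> \<rho> \<longrightarrow> (\<forall>i. \<rho> i \<in> D) \<and> wins pr X \<rho>"
    using dm v unfolding dominion_def by blast
  obtain \<tau> where t: "strategy_in VE E (opp X) G \<tau>" and vG: "v \<in> G"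
    and w2: "\<forall>\<rho>. play_in E G \<rho> \<and> \<rho> 0 = v \<and> agrees VE (opp X) \<tau> \<rho> \<longrightarrow> (\<exists>i. \<rho> i \<in> W)"
    using v unfolding attr_def by blast
  obtain \<rho> where "play_in E G \<rho>" "\<rho> 0 = v" "agrees VE X \<sigma> \<rho>" "agrees VE (opp X) \<tau> \<rho>"
    using play_from2[OF sg s t vG] by blast
  then show False using w w2 WD by blast
qed

lemma no_small_dom:
  assumes sg: "subgame V E G" and dm: "dominion VE E pr X G D" and c: "card D \<le> 1"
  shows "D = {}"
proof (rule ccontr)
  assume "D \<noteq> {}"
  then obtain v where v: "v \<in> D" by blast
  have fin: "finite D" using dm sg pgame unfolding dominion_def subgame_def parity_game_def
    by (meson finite_subset)
  have one: "\<forall>a\<in>D. \<forall>b\<in>D. a = b" using c fin card_le_Suc0_iff_eq by (metis One_nat_def)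
  obtain \<sigma> where s: "strategy_in VE E X G \<sigma>"
    and w: "\<forall>\<rho>. play_in E G \<rho> \<and> \<rho> 0 = v \<and> agrees VE X \<sigma> \<rho> \<longrightarrow> (\<forall>i. \<rho> i \<in> D) \<and> wins pr X \<rho>"
    using dm v unfolding dominion_def by blast
  have vG: "v \<in> G" using dm v unfolding dominion_def by blast
  obtain \<rho> where r: "play_in E G \<rho>" "\<rho> 0 = v" "agrees VE X \<sigma> \<rho>" using play_from[OF sg s vG] by blast
  then have "\<rho> 1 = v" using w one v by metis
  moreover have "(\<rho> 0, \<rho> 1) \<in> E" using r(1) unfolding play_in_def by (metis One_nat_def)
  ultimately show False using r(2) pgame unfolding parity_game_def by auto
qed


lemma drop_map_upt: "drop j (map \<pi> [0..<Suc (j+k)]) = map (\<lambda>k. \<pi> (j + k)) [0..<Suc k]"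
  by (rule nth_equalityI) (simp_all del: upt_Suc)

lemma shift_closed:
  assumes sgH: "subgame V E H" and t: "strategy_in VE E X H \<tau>"
    and w: "\<forall>\<pi>. play_in E H \<pi> \<and> \<pi> 0 = u \<and> agrees VE X \<tau> \<pi> \<longrightarrow> (\<forall>i. \<pi> i \<in> D) \<and> wins pr X \<pi>"
    and p: "play_in E H \<pi>" and p0: "\<pi> 0 = u" and ag: "agrees VE X \<tau> \<pi>"
  shows "\<exists>\<tau>'. strategy_in VE E X H \<tau>' \<and> (\<forall>\<pi>'. play_in E H \<pi>' \<and> \<pi>' 0 = \<pi> i \<and> agrees VE X \<tau>' \<pi>' \<longrightarrow> (\<forall>k. \<pi>' k \<in> D) \<and> wins pr X \<pi>')"
proof -
  have safe: "\<forall>\<rho>'. play_in E H \<rho>' \<and> agrees VE X \<tau> \<rho>' \<and> (\<forall>k\<le>i. \<rho>' k = \<pi> k) \<longrightarrow> (\<forall>j\<ge>i. \<rho>' j \<in> H)"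
    unfolding play_in_def by blast
  note gr = gen_restrict[OF sgH sgH order.refl t p ag safe]
  show ?thesis
  proof (rule exI, rule conjI[OF gr(1)], intro allI impI)
    fix \<pi>' assume a: "play_in E H \<pi>' \<and> \<pi>' 0 = \<pi> i \<and> agrees VE X (\<lambda>g. if \<tau> (map \<pi> [0..<i] @ g) \<in> H then \<tau> (map \<pi> [0..<i] @ g) else anysucc H (last g)) \<pi>'"
    define \<psi> where "\<psi> = (\<lambda>k. if k < i then \<pi> k else \<pi>' (k - i))"
    have "play_in E H \<psi> \<and> agrees VE X \<tau> \<psi>" using gr(2)[of \<pi>'] a unfolding \<psi>_def by blast
    moreover have "\<psi> 0 = u" using a p0 by (cases "i = 0") (auto simp: \<psi>_def)
    ultimately have r: "(\<forall>k. \<psi> k \<in> D) \<and> wins pr X \<psi>" using w by blast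
    have e: "(\<lambda>k. \<psi> (i + k)) = \<pi>'" by (simp add: \<psi>_def)
    show "(\<forall>k. \<pi>' k \<in> D) \<and> wins pr X \<pi>'"
      using r wins_shift[of X \<psi> i] unfolding e by (metis e)
  qed
qed

lemma key_lemma:
  assumes sg: "subgame V E S" and b: "\<forall>v\<in>S. pr v \<le> d" and par: "even d \<longleftrightarrow> P = Even"
    and dm: "dominion VE E pr (opp P) S D" and ne: "D \<noteq> {}"
  shows "\<exists>X. X \<noteq> {} \<and> X \<subseteq> D \<and> dominion VE E pr (opp P) (subH VE E pr P S d) X"
proof -
  define Q where "Q = opp P"
  define N where "N = {v\<in>S. pr v = d}"
  define A where "A = attr VE E P N S"
  define H where "H = subH VE E pr P S d"
  have HA: "H = S - A" by (simp add: H_def A_def N_def subH_def)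
  have clH: "closedP P S H" unfolding HA A_def by (rule attr_compl[OF sg])
  then have sgH: "subgame V E H" and HS: "H \<subseteq> S" unfolding closedP_def by auto
  obtain v0 where v0: "v0 \<in> D" using ne by blast
  obtain \<tau>0 where t0: "strategy_in VE E Q S \<tau>0"
    and w0: "\<forall>\<rho>. play_in E S \<rho> \<and> \<rho> 0 = v0 \<and> agrees VE Q \<tau>0 \<rho> \<longrightarrow> (\<forall>i. \<rho> i \<in> D) \<and> wins pr Q \<rho>"
    using dm v0 unfolding dominion_def Q_def by blast
  have v0S: "v0 \<in> S" using dm v0 unfolding dominion_def by blast
  define Valid where "Valid \<rho> \<longleftrightarrow> play_in E S \<rho> \<and> agrees VE Q \<tau>0 \<rho> \<and> \<rho> 0 = v0" for \<rho>
  define Good where "Good \<rho> n \<longleftrightarrow> (\<forall>\<rho>'. play_in E S \<rho>' \<and> agrees VE Q \<tau>0 \<rho>' \<and> (\<forall>i\<le>n. \<rho>' i = \<rho> i) \<longrightarrow> (\<forall>j\<ge>n. \<rho>' j \<notin> A))" for \<rho> n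
  obtain \<rho>0 where \<rho>0: "Valid \<rho>0" using play_from[OF sg t0 v0S] unfolding Valid_def by blast
  have t0': "strategy_in VE E (opp P) S \<tau>0" using t0 Q_def by simp
  have ex: "\<exists>\<rho> n. Valid \<rho> \<and> Good \<rho> n"
  proof (rule ccontr)
    assume nt: "\<not> ?thesis"
    define R where "R p p' \<longleftrightarrow> Valid (fst p') \<and> snd p < snd p' \<and> (\<forall>i\<le>snd p. fst p' i = fst p i)
        \<and> (\<exists>j. snd p \<le> j \<and> j < snd p' \<and> fst p' j \<in> N)" for p p' :: "(nat \<Rightarrow> 'v) \<times> nat"
    have step: "\<exists>p'. R p p'" if vp: "Valid (fst p)" for p
    proof -
      obtain \<rho> n where pe: "p = (\<rho>, n)" by (cases p)
      have "\<not> Good \<rho> n" using nt vp pe by auto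
      then obtain \<rho>' j where r': "play_in E S \<rho>'" "agrees VE Q \<tau>0 \<rho>'" "\<forall>i\<le>n. \<rho>' i = \<rho> i"
        and j: "j \<ge> n" "\<rho>' j \<in> A" unfolding Good_def by blast
      obtain \<sigma>a where sa: "strategy_in VE E P S \<sigma>a"
        and wa: "\<forall>\<rho>. play_in E S \<rho> \<and> \<rho> 0 = \<rho>' j \<and> agrees VE P \<sigma>a \<rho> \<longrightarrow> (\<exists>i. \<rho> i \<in> N)"
        using j(2) unfolding A_def attr_def by blast
      define \<sigma>' where "\<sigma>' g = (if j < length g then \<sigma>a (drop j g) else anysucc S (last g))" for g
      have s': "strategy_in VE E P S \<sigma>'"
        unfolding strategy_in_def
      proof (intro allI impI)
        fix g assume g: "g \<noteq> [] \<and> last g \<in> S \<and> owns VE P (last g)"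
        show "\<sigma>' g \<in> S \<and> (last g, \<sigma>' g) \<in> E"
        proof (cases "j < length g")
          case True
          then have d1: "drop j g \<noteq> []" and d2: "last (drop j g) = last g" by auto
          have "\<sigma>a (drop j g) \<in> S \<and> (last (drop j g), \<sigma>a (drop j g)) \<in> E"
            using sa g d1 d2 unfolding strategy_in_def by metis
          then show ?thesis using True d2 by (simp add: \<sigma>'_def)
        next
          case False then show ?thesis using anysucc[OF sg] g by (simp add: \<sigma>'_def)
        qed
      qed
      have path: "\<forall>k<j. \<rho>' k \<in> S \<and> (\<rho>' k, \<rho>' (Suc k)) \<in> E" and lst: "\<rho>' j \<in> S"
        using r'(1) unfolding play_in_def by auto
      obtain \<pi> where pp: "play_in E S \<pi>" and ppre: "\<forall>k\<le>j. \<pi> k = \<rho>' k"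
        and pst: "\<forall>i\<ge>j. \<pi> (Suc i) = (if owns VE P (\<pi> i) then \<sigma>' else \<tau>0) (map \<pi> [0..<Suc i])"
        using L0f[OF sg s' t0' path lst] by blast
      have agQ: "agrees VE Q \<tau>0 \<pi>"
        unfolding agrees_def
      proof (intro allI impI)
        fix i assume o: "owns VE Q (\<pi> i)"
        show "\<pi> (Suc i) = \<tau>0 (map \<pi> [0..<Suc i])"
        proof (cases "j \<le> i")
          case True then show ?thesis using pst o Q_def by auto
        next
          case False
          have me: "map \<pi> [0..<Suc i] = map \<rho>' [0..<Suc i]" using ppre False by (intro map_cong) auto
          have "\<pi> (Suc i) = \<rho>' (Suc i)" "\<pi> i = \<rho>' i" using ppre False by auto
          then show ?thesis using r'(2) o me unfolding agrees_def by metis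
        qed
      qed
      define \<pi>' where "\<pi>' k = \<pi> (j + k)" for k
      have "play_in E S \<pi>'" using pp unfolding play_in_def \<pi>'_def by simp
      moreover have "\<pi>' 0 = \<rho>' j" using ppre by (simp add: \<pi>'_def)
      moreover have "agrees VE P \<sigma>a \<pi>'"
        unfolding agrees_def
      proof (intro allI impI)
        fix k assume o: "owns VE P (\<pi>' k)"
        have "\<pi>' (Suc k) = \<sigma>' (map \<pi> [0..<Suc (j+k)])" using pst o unfolding \<pi>'_def by simp
        also have "\<dots> = \<sigma>a (map \<pi>' [0..<Suc k])"
          unfolding \<sigma>'_def \<pi>'_def using drop_map_upt[of j \<pi> k] by (simp del: upt_Suc)
        finally show "\<pi>' (Suc k) = \<sigma>a (map \<pi>' [0..<Suc k])" .
      qed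
      ultimately obtain k where k: "\<pi>' k \<in> N" using wa by blast
      have "R p (\<pi>, Suc (j + k))"
        unfolding R_def pe Valid_def
        using pp agQ ppre r'(3) j(1) k vp pe \<pi>'_def Valid_def
        by (auto intro!: exI[of _ "j + k"])
      then show ?thesis by blast
    qed
    then obtain F where F: "\<And>p. Valid (fst p) \<Longrightarrow> R p (F p)" by metis
    define st where "st k = (F ^^ k) (\<rho>0, 0)" for k
    have stS: "st (Suc k) = F (st k)" for k by (simp add: st_def)
    have vst: "Valid (fst (st k))" for k
      by (induction k) (auto simp: stS st_def \<rho>0 dest: F[unfolded R_def])
    have Rst: "R (st k) (st (Suc k))" for k using F vst stS by simp
    have sge: "snd (st k) \<ge> k" for k
    proof (induction k)
      case 0 then show ?case by simp
    next
      case (Suc k) then show ?case using Rst[of k] unfolding R_def by simp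
    qed
    have smono: "snd (st k) \<le> snd (st m)" if "k \<le> m" for k m
      using that
    proof (induction m rule: dec_induct)
      case base then show ?case by simp
    next
      case (step m) then show ?case using Rst[of m] unfolding R_def by simp
    qed
    have coh: "fst (st m) i = fst (st k) i" if "k \<le> m" "i \<le> snd (st k)" for k m i
      using that(1)
    proof (induction m rule: dec_induct)
      case base then show ?case by simp
    next
      case (step m)
      have "i \<le> snd (st m)" using that(2) smono[OF step.hyps(1)] by simp
      then show ?case using Rst[of m] step.IH unfolding R_def by simp
    qed
    define lim where "lim i = fst (st i) i" for i
    have limeq: "lim i = fst (st m) i" if "i \<le> m" for i m
      using coh[OF that, of i] sge[of i] by (simp add: lim_def)
    have plim: "play_in E S lim"
      unfolding play_in_def
    proof
      fix i
      have "play_in E S (fst (st (Suc i)))" using vst unfolding Valid_def by blast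
      then show "lim i \<in> S \<and> (lim i, lim (Suc i)) \<in> E"
        using limeq[of i "Suc i"] limeq[of "Suc i" "Suc i"] unfolding play_in_def by simp
    qed
    have l0: "lim 0 = v0" using vst[of 0] unfolding lim_def Valid_def by simp
    have aglim: "agrees VE Q \<tau>0 lim"
      unfolding agrees_def
    proof (intro allI impI)
      fix i assume o: "owns VE Q (lim i)"
      have a: "agrees VE Q \<tau>0 (fst (st (Suc i)))" using vst unfolding Valid_def by blast
      have me: "map lim [0..<Suc i] = map (fst (st (Suc i))) [0..<Suc i]"
        using limeq by (intro map_cong) auto
      have e1: "lim i = fst (st (Suc i)) i" by (rule limeq) simp
      have e2: "lim (Suc i) = fst (st (Suc i)) (Suc i)" by (rule limeq) simp
      show "lim (Suc i) = \<tau>0 (map lim [0..<Suc i])"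
        using a o me e1 e2 unfolding agrees_def by metis
    qed
    have inf: "infinite {i. pr (lim i) = d}"
      unfolding infinite_nat_iff_unbounded_le
    proof
      fix m
      obtain j where j: "snd (st m) \<le> j" "j < snd (st (Suc m))" "fst (st (Suc m)) j \<in> N"
        using Rst[of m] unfolding R_def by blast
      have "lim j = fst (st (max j (Suc m))) j" using limeq by simp
      also have "\<dots> = fst (st (Suc m)) j" using coh[of "Suc m" "max j (Suc m)" j] j(2) by simp
      finally have "pr (lim j) = d" using j(3) unfolding N_def by simp
      moreover have "j \<ge> m" using j(1) sge[of m] by simp
      ultimately show "\<exists>n\<ge>m. n \<in> {i. pr (lim i) = d}" by blast
    qed
    have "wins pr Q lim" using w0 plim l0 aglim by blast
    then show False using not_wins_opp[OF plim b inf par] Q_def by simp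
  qed
  then obtain \<rho> n where vr: "Valid \<rho>" and gr0: "Good \<rho> n" by blast
  have safe: "\<forall>\<rho>'. play_in E S \<rho>' \<and> agrees VE Q \<tau>0 \<rho>' \<and> (\<forall>i\<le>n. \<rho>' i = \<rho> i) \<longrightarrow> (\<forall>j\<ge>n. \<rho>' j \<in> H)"
    using gr0 unfolding Good_def HA play_in_def by blast
  have rp: "play_in E S \<rho>" "agrees VE Q \<tau>0 \<rho>" "\<rho> 0 = v0" using vr unfolding Valid_def by auto
  note gr = gen_restrict[OF sg sgH HS t0 rp(1) rp(2) safe]
  define X where "X = {u \<in> D \<inter> H. \<exists>\<tau>. strategy_in VE E Q H \<tau> \<and> (\<forall>\<pi>. play_in E H \<pi> \<and> \<pi> 0 = u \<and> agrees VE Q \<tau> \<pi> \<longrightarrow> (\<forall>i. \<pi> i \<in> D) \<and> wins pr Q \<pi>)}"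
  have uX: "\<rho> n \<in> X"
  proof -
    have "\<rho> n \<in> D" using w0 rp by blast
    moreover have "\<rho> n \<in> H" using safe rp by blast
    moreover have "\<forall>\<pi>. play_in E H \<pi> \<and> \<pi> 0 = \<rho> n \<and> agrees VE Q (\<lambda>g. if \<tau>0 (map \<rho> [0..<n] @ g) \<in> H then \<tau>0 (map \<rho> [0..<n] @ g) else anysucc H (last g)) \<pi> \<longrightarrow> (\<forall>i. \<pi> i \<in> D) \<and> wins pr Q \<pi>"
    proof (intro allI impI)
      fix \<pi> assume a: "play_in E H \<pi> \<and> \<pi> 0 = \<rho> n \<and> agrees VE Q (\<lambda>g. if \<tau>0 (map \<rho> [0..<n] @ g) \<in> H then \<tau>0 (map \<rho> [0..<n] @ g) else anysucc H (last g)) \<pi>"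
      define \<psi> where "\<psi> = (\<lambda>k. if k < n then \<rho> k else \<pi> (k - n))"
      have "play_in E S \<psi> \<and> agrees VE Q \<tau>0 \<psi>" using gr(2)[of \<pi>] a unfolding \<psi>_def by blast
      moreover have "\<psi> 0 = v0" using a rp by (cases "n = 0") (auto simp: \<psi>_def)
      ultimately have r: "(\<forall>k. \<psi> k \<in> D) \<and> wins pr Q \<psi>" using w0 by blast
      have e: "(\<lambda>k. \<psi> (n + k)) = \<pi>" by (simp add: \<psi>_def)
      show "(\<forall>k. \<pi> k \<in> D) \<and> wins pr Q \<pi>"
        using r wins_shift[of Q \<psi> n] unfolding e by (metis e)
    qed
    ultimately show ?thesis unfolding X_def using gr(1) by blast
  qed
  have "dominion VE E pr Q H X"
    unfolding dominion_def
  proof (intro conjI ballI)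
    show "X \<subseteq> H" unfolding X_def by blast
  next
    fix u assume u: "u \<in> X"
    then obtain \<tau> where t: "strategy_in VE E Q H \<tau>"
      and w: "\<forall>\<pi>. play_in E H \<pi> \<and> \<pi> 0 = u \<and> agrees VE Q \<tau> \<pi> \<longrightarrow> (\<forall>i. \<pi> i \<in> D) \<and> wins pr Q \<pi>"
      unfolding X_def by blast
    have "\<forall>\<pi>. play_in E H \<pi> \<and> \<pi> 0 = u \<and> agrees VE Q \<tau> \<pi> \<longrightarrow> (\<forall>i. \<pi> i \<in> X) \<and> wins pr Q \<pi>"
    proof (intro allI impI)
      fix \<pi> assume a: "play_in E H \<pi> \<and> \<pi> 0 = u \<and> agrees VE Q \<tau> \<pi>"
      have "wins pr Q \<pi>" using a w by blast
      moreover have "\<forall>i. \<pi> i \<in> X"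
      proof
        fix i
        have "\<pi> i \<in> D" "\<pi> i \<in> H" using a w unfolding play_in_def by blast+
        moreover have "\<exists>\<tau>'. strategy_in VE E Q H \<tau>' \<and> (\<forall>\<pi>'. play_in E H \<pi>' \<and> \<pi>' 0 = \<pi> i \<and> agrees VE Q \<tau>' \<pi>' \<longrightarrow> (\<forall>k. \<pi>' k \<in> D) \<and> wins pr Q \<pi>')"
          using shift_closed[OF sgH t w] a by blast
        ultimately show "\<pi> i \<in> X" unfolding X_def by blast
      qed
      ultimately show "(\<forall>i. \<pi> i \<in> X) \<and> wins pr Q \<pi>" by blast
    qed
    then show "\<exists>\<tau>. strategy_in VE E Q H \<tau> \<and> (\<forall>\<pi>. play_in E H \<pi> \<and> \<pi> 0 = u \<and> agrees VE Q \<tau> \<pi> \<longrightarrow> (\<forall>i. \<pi> i \<in> X) \<and> wins pr Q \<pi>)"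
      using t by blast
  qed
  moreover have "X \<subseteq> D" "X \<noteq> {}" using uX unfolding X_def by blast+
  ultimately show ?thesis unfolding Q_def H_def by blast
qed


lemma solve_subset:
 "solve VE E pr P G d p q R \<Longrightarrow> R \<subseteq> G"
 "loopA VE E pr P d p q G G' \<Longrightarrow> G' \<subseteq> G"
 "loopB VE E pr P d p q G W R \<Longrightarrow> R \<subseteq> G"
 by (induction rule: solve_loopA_loopB.inducts) auto

definition Claim :: "nat \<Rightarrow> bool" where
 "Claim d \<longleftrightarrow> (\<forall>P G p q. subgame V E G \<and> (\<forall>v\<in>G. pr v \<le> d) \<and> (even d \<longleftrightarrow> P = Even) \<longrightarrow>
   (\<exists>R. solve VE E pr P G d p q R) \<and>
   (\<forall>R. solve VE E pr P G d p q R \<longrightarrow> (\<forall>D. dominion VE E pr P G D \<and> card D \<le> p \<longrightarrow> D \<subseteq> R)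
        \<and> (\<forall>D. dominion VE E pr (opp P) G D \<and> card D \<le> q \<longrightarrow> D \<inter> R = {})))"

lemma finite_sub: "subgame V E S \<Longrightarrow> finite S"
  using pgame unfolding subgame_def parity_game_def by (meson finite_subset)

lemma dom_finite: "subgame V E S \<Longrightarrow> dominion VE E pr X S D \<Longrightarrow> finite D"
  using finite_sub unfolding dominion_def by (meson finite_subset)

lemma solve_empty: "solve VE E pr P {} d p q R \<Longrightarrow> R = {}"
  by (cases rule: solve.cases) auto

lemma dom_empty: "dominion VE E pr X {} D \<Longrightarrow> D = {}"
  unfolding dominion_def by blast

lemma Claim0: "Claim 0"
  unfolding Claim_def
proof (intro allI impI)
  fix P G p q assume a: "subgame V E G \<and> (\<forall>v\<in>G. pr v \<le> 0) \<and> (even (0::nat) \<longleftrightarrow> P = Even)"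
  have "G = {}"
  proof (rule ccontr)
    assume "G \<noteq> {}"
    then obtain v where "v \<in> G" by blast
    then show False using a pgame unfolding parity_game_def subgame_def by force
  qed
  then show "(\<exists>R. solve VE E pr P G 0 p q R) \<and>
   (\<forall>R. solve VE E pr P G 0 p q R \<longrightarrow> (\<forall>D. dominion VE E pr P G D \<and> card D \<le> p \<longrightarrow> D \<subseteq> R)
        \<and> (\<forall>D. dominion VE E pr (opp P) G D \<and> card D \<le> q \<longrightarrow> D \<inter> R = {}))"
    using solve_base[of G p VE E pr P 0 q] solve_empty dom_empty by blast
qed

end

locale stepc = pg V VE E pr for V VE :: "'v set" and E :: "('v \<times> 'v) set" and pr :: "'v \<Rightarrow> nat" +
  fixes d :: nat and P :: player and p q :: nat
  assumes IH: "Claim d" and par: "even (Suc d) \<longleftrightarrow> P = Even"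
begin

abbreviation "Q \<equiv> opp P"
definition good :: "'v set \<Rightarrow> bool" where "good S \<longleftrightarrow> subgame V E S \<and> (\<forall>v\<in>S. pr v \<le> Suc d)"
abbreviation "Hs S \<equiv> subH VE E pr P S (Suc d)"

lemma H_good:
  assumes g: "good S" shows "closedP P S (Hs S)" "\<forall>v\<in>Hs S. pr v \<le> d"
proof -
  have sg: "subgame V E S" using g good_def by simp
  show "closedP P S (Hs S)" unfolding subH_def by (rule attr_compl[OF sg])
  have "{v \<in> S. pr v = Suc d} \<inter> S \<subseteq> attr VE E P {v \<in> S. pr v = Suc d} S" by (rule attr_target[OF sg])
  then show "\<forall>v\<in>Hs S. pr v \<le> d" using g unfolding good_def subH_def by fastforce
qed

lemma IH_app:
  assumes g: "good S"
  shows "\<exists>W. solve VE E pr Q (Hs S) d b p W"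
    and "solve VE E pr Q (Hs S) d b p W \<Longrightarrow> dominion VE E pr Q (Hs S) X \<Longrightarrow> card X \<le> b \<Longrightarrow> X \<subseteq> W"
    and "solve VE E pr Q (Hs S) d b p W \<Longrightarrow> dominion VE E pr P (Hs S) D \<Longrightarrow> card D \<le> p \<Longrightarrow> D \<inter> W = {}"
proof -
  have sgH: "subgame V E (Hs S)" using H_good[OF g] unfolding closedP_def by blast
  have pq: "even d \<longleftrightarrow> Q = Even" using par by (cases P) auto
  have C0: "\<forall>P G p q. subgame V E G \<and> (\<forall>v\<in>G. pr v \<le> d) \<and> (even d \<longleftrightarrow> P = Even) \<longrightarrow>
   (\<exists>R. solve VE E pr P G d p q R) \<and>
   (\<forall>R. solve VE E pr P G d p q R \<longrightarrow> (\<forall>D. dominion VE E pr P G D \<and> card D \<le> p \<longrightarrow> D \<subseteq> R)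
        \<and> (\<forall>D. dominion VE E pr (opp P) G D \<and> card D \<le> q \<longrightarrow> D \<inter> R = {}))"
    using IH unfolding Claim_def .
  note C1 = C0[THEN spec[where x=Q], THEN spec[where x="Hs S"], THEN spec[where x=b], THEN spec[where x=p]]
  note C = mp[OF C1 conjI[OF sgH conjI[OF H_good(2)[OF g] pq]]]
  show "\<exists>W. solve VE E pr Q (Hs S) d b p W" using C by blast
  show "solve VE E pr Q (Hs S) d b p W \<Longrightarrow> dominion VE E pr Q (Hs S) X \<Longrightarrow> card X \<le> b \<Longrightarrow> X \<subseteq> W"
    using C by blast
  show "solve VE E pr Q (Hs S) d b p W \<Longrightarrow> dominion VE E pr P (Hs S) D \<Longrightarrow> card D \<le> p \<Longrightarrow> D \<inter> W = {}"
    using C by simp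
qed

lemma rem_good:
  assumes g: "good S" shows "good (S - attr VE E Q W S)" "closedP Q S (S - attr VE E Q W S)"
proof -
  have sg: "subgame V E S" using g good_def by simp
  show c: "closedP Q S (S - attr VE E Q W S)" by (rule attr_compl[OF sg])
  then show "good (S - attr VE E Q W S)" using g unfolding good_def closedP_def by blast
qed

lemma W_sub: "solve VE E pr Q (Hs S) d b p W \<Longrightarrow> W \<subseteq> S"
  using solve_subset(1) unfolding subH_def by blast

lemma shrink:
  assumes g: "good S" and s: "solve VE E pr Q (Hs S) d b p W" and ne: "W \<noteq> {}"
  shows "card (S - attr VE E Q W S) < card S"
proof -
  have sg: "subgame V E S" using g good_def by simp
  have "W \<subseteq> attr VE E Q W S" using attr_target[OF sg, of W Q] W_sub[OF s] by blast
  then have "S - attr VE E Q W S \<subset> S" using ne W_sub[OF s] by blast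
  then show ?thesis using finite_sub[OF sg] by (meson psubset_card_mono)
qed

lemma iterI:
  assumes g: "good S" and s: "solve VE E pr Q (Hs S) d b p W"
    and dm: "dominion VE E pr P S D" and c: "card D \<le> p"
  shows "dominion VE E pr P (S - attr VE E Q W S) D"
proof -
  have sg: "subgame V E S" using g good_def by simp
  have cl: "closedP P S (Hs S)" using H_good[OF g] by blast
  have d1: "dominion VE E pr P (Hs S) (D \<inter> Hs S)" by (rule dom_trap[OF cl dm])
  have "card (D \<inter> Hs S) \<le> p" using c dom_finite[OF sg dm] by (meson card_mono inf_le1 le_trans)
  then have "(D \<inter> Hs S) \<inter> W = {}" using IH_app(3)[OF g s d1] by blast
  moreover have "W \<subseteq> Hs S" using solve_subset(1)[OF s] .
  ultimately have "W \<inter> D = {}" by blast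
  then have "attr VE E (opp P) W S \<inter> D = {}" by (rule attr_disjoint[OF sg dm])
  moreover have "D \<subseteq> S" using dm unfolding dominion_def by blast
  ultimately have DT: "D \<subseteq> S - attr VE E Q W S" by blast
  have g2: "good (S - attr VE E Q W S)" by (rule rem_good(1)[OF g])
  show ?thesis
    by (rule dom_sub[OF sg _ _ dm DT]) (use g2 good_def in auto)
qed

lemma LA_ex: "good S \<Longrightarrow> \<exists>S1. loopA VE E pr P (Suc d) p q S S1"
proof (induction "card S" arbitrary: S rule: less_induct)
  case less
  obtain W where s: "solve VE E pr Q (Hs S) d (q div 2) p W" using IH_app(1)[OF less.prems] by blast
  show ?case
  proof (cases "W = {}")
    case True then show ?thesis using loopA_stop[of VE E pr P S "Suc d" q p] s by auto
  next
    case False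
    obtain S1 where "loopA VE E pr P (Suc d) p q (S - attr VE E Q W S) S1"
      using less.hyps[OF shrink[OF less.prems s False] rem_good(1)[OF less.prems]] by blast
    then show ?thesis using loopA_step[of VE E pr P S "Suc d" q p W] s False by auto
  qed
qed

lemma LB_ex: "good S \<Longrightarrow> \<exists>R. loopB VE E pr P (Suc d) p q S W R"
proof (induction "card S" arbitrary: S W rule: less_induct)
  case less
  show ?case
  proof (cases "W = {}")
    case True then show ?thesis using loopB_stop by fastforce
  next
    case False
    obtain W' where s: "solve VE E pr Q (Hs S) d (q div 2) p W'" using IH_app(1)[OF less.prems] by blast
    show ?thesis
    proof (cases "W' = {}")
      case True
      then have "loopB VE E pr P (Suc d) p q (S - attr VE E Q W' S) W' (S - attr VE E Q W' S)"
        using loopB_stop by fastforce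
      then show ?thesis using loopB_step[of W VE E pr P S "Suc d" q p W'] s False by auto
    next
      case nW: False
      obtain R where "loopB VE E pr P (Suc d) p q (S - attr VE E Q W' S) W' R"
        using less.hyps[OF shrink[OF less.prems s nW] rem_good(1)[OF less.prems]] by blast
      then show ?thesis using loopB_step[of W VE E pr P S "Suc d" q p W'] s False by auto
    qed
  qed
qed

lemma LA_props:
  "solve VE E pr P' S dd p' q' R \<Longrightarrow> True"
  "loopA VE E pr P' dd p' q' S S1 \<Longrightarrow> P' = P \<longrightarrow> dd = Suc d \<longrightarrow> p' = p \<longrightarrow> q' = q \<longrightarrow> good S \<longrightarrow>
     good S1 \<and> closedP Q S S1 \<and> solve VE E pr Q (Hs S1) d (q div 2) p {}
     \<and> (\<forall>D. dominion VE E pr P S D \<and> card D \<le> p \<longrightarrow> dominion VE E pr P S1 D)"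
  "loopB VE E pr P' dd p' q' S W R \<Longrightarrow> True"
proof (induction rule: solve_loopA_loopB.inducts)
  case (loopA_stop P' G dd q' p')
  show ?case
  proof (intro impI)
    assume a: "P' = P" "dd = Suc d" "p' = p" "q' = q" "good G"
    then have "subgame V E G" using good_def by simp
    then show "good G \<and> closedP Q G G \<and> solve VE E pr Q (Hs G) d (q div 2) p {}
     \<and> (\<forall>D. dominion VE E pr P G D \<and> card D \<le> p \<longrightarrow> dominion VE E pr P G D)"
      using a loopA_stop.IH(1) closedP_refl by auto
  qed
next
  case (loopA_step P' G dd q' p' W G')
  show ?case
  proof (intro impI)
    assume a: "P' = P" "dd = Suc d" "p' = p" "q' = q" "good G"
    have s: "solve VE E pr Q (Hs G) d (q div 2) p W" using loopA_step.IH(1) a by simp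
    have g2: "good (G - attr VE E Q W G)" using rem_good(1)[OF a(5)] .
    have IHx: "good G' \<and> closedP Q (G - attr VE E Q W G) G' \<and> solve VE E pr Q (Hs G') d (q div 2) p {}
     \<and> (\<forall>D. dominion VE E pr P (G - attr VE E Q W G) D \<and> card D \<le> p \<longrightarrow> dominion VE E pr P G' D)"
      using loopA_step.IH(4) a g2 by simp
    show "good G' \<and> closedP Q G G' \<and> solve VE E pr Q (Hs G') d (q div 2) p {}
     \<and> (\<forall>D. dominion VE E pr P G D \<and> card D \<le> p \<longrightarrow> dominion VE E pr P G' D)"
      using IHx closedP_trans[OF rem_good(2)[OF a(5)]] iterI[OF a(5) s] by blast
  qed
qed auto

lemma LB_i:
  "solve VE E pr P' S dd p' q' R \<Longrightarrow> True"
  "loopA VE E pr P' dd p' q' S S1 \<Longrightarrow> True"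
  "loopB VE E pr P' dd p' q' S W R \<Longrightarrow> P' = P \<longrightarrow> dd = Suc d \<longrightarrow> p' = p \<longrightarrow> q' = q \<longrightarrow> good S \<longrightarrow>
     (\<forall>D. dominion VE E pr P S D \<and> card D \<le> p \<longrightarrow> D \<subseteq> R)"
proof (induction rule: solve_loopA_loopB.inducts)
  case (loopB_stop P' dd p' q' G)
  then show ?case unfolding dominion_def by blast
next
  case (loopB_step W P' G dd q' p' W' R)
  show ?case
  proof (intro impI allI)
    fix D assume a: "P' = P" "dd = Suc d" "p' = p" "q' = q" "good G"
      and dD: "dominion VE E pr P G D \<and> card D \<le> p"
    have s: "solve VE E pr Q (Hs G) d (q div 2) p W'" using loopB_step.IH(1) a by simp
    have g2: "good (G - attr VE E Q W' G)" using rem_good(1)[OF a(5)] .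
    have "dominion VE E pr P (G - attr VE E Q W' G) D" using iterI[OF a(5) s] dD by blast
    then show "D \<subseteq> R" using loopB_step.IH(4) a g2 dD by simp
  qed
qed auto

lemma LB_ii:
  "solve VE E pr P' S dd p' q' R \<Longrightarrow> True"
  "loopA VE E pr P' dd p' q' S S1 \<Longrightarrow> True"
  "loopB VE E pr P' dd p' q' S W R \<Longrightarrow> P' = P \<longrightarrow> dd = Suc d \<longrightarrow> p' = p \<longrightarrow> q' = q \<longrightarrow> good S \<longrightarrow>
     (\<forall>D. dominion VE E pr Q S D \<and> card D \<le> q div 2 \<and> (W = {} \<longrightarrow> D = {}) \<longrightarrow> D \<inter> R = {})"
proof (induction rule: solve_loopA_loopB.inducts)
  case (loopB_stop P' dd p' q' G)
  then show ?case by blast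
next
  case (loopB_step W P' G dd q' p' W' R)
  show ?case
  proof (intro impI allI)
    fix D assume a: "P' = P" "dd = Suc d" "p' = p" "q' = q" "good G"
      and dD: "dominion VE E pr Q G D \<and> card D \<le> q div 2 \<and> (W = {} \<longrightarrow> D = {})"
    have sg: "subgame V E G" using a(5) good_def by simp
    have s: "solve VE E pr Q (Hs G) d (q div 2) p W'" using loopB_step.IH(1) a by simp
    have g2: "good (G - attr VE E Q W' G)" using rem_good(1)[OF a(5)] .
    let ?G' = "G - attr VE E Q W' G"
    have d2: "dominion VE E pr Q ?G' (D \<inter> ?G')" using dom_trap[OF rem_good(2)[OF a(5)]] dD by blast
    have c2: "card (D \<inter> ?G') \<le> q div 2" using dD dom_finite[OF sg] by (meson card_mono inf_le1 le_trans)
    have e2: "W' = {} \<longrightarrow> D \<inter> ?G' = {}"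
    proof
      assume W'e: "W' = {}"
      show "D \<inter> ?G' = {}"
      proof (rule ccontr)
        assume "D \<inter> ?G' \<noteq> {}"
        then have "D \<noteq> {}" by blast
        have pp: "even (Suc d) \<longleftrightarrow> P = Even" by (rule par)
        obtain X where X: "X \<noteq> {}" "X \<subseteq> D" "dominion VE E pr Q (Hs G) X"
          using key_lemma[OF sg _ pp _ \<open>D \<noteq> {}\<close>] a(5) dD unfolding good_def by blast
        have "card X \<le> q div 2" using X(2) dD dom_finite[OF sg] by (meson card_mono le_trans)
        then have "X \<subseteq> W'" using IH_app(2)[OF a(5) s X(3)] by blast
        then show False using X(1) W'e by blast
      qed
    qed
    have "D \<inter> ?G' \<inter> R = {}" using loopB_step.IH(4) a g2 d2 c2 e2 by simp
    moreover have "R \<subseteq> ?G'" using solve_subset(3)[OF loopB_step.IH(3)] a(1) by simp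
    ultimately show "D \<inter> R = {}" by blast
  qed
qed auto

end

context pg begin

lemma Claim_Suc: assumes IH: "Claim d" shows "Claim (Suc d)"
  unfolding Claim_def
proof (intro allI impI)
  fix P G p q
  assume a: "subgame V E G \<and> (\<forall>v\<in>G. pr v \<le> Suc d) \<and> (even (Suc d) \<longleftrightarrow> P = Even)"
  interpret st: stepc V VE E pr d P p q
    by unfold_locales (use IH a in auto)
  have g: "st.good G" using a st.good_def by simp
  have sg: "subgame V E G" using a by simp
  have ex: "\<exists>R. solve VE E pr P G (Suc d) p q R"
  proof (cases "G = {} \<or> p \<le> 1")
    case True then show ?thesis using solve_base by blast
  next
    case False
    obtain G1 where la: "loopA VE E pr P (Suc d) p q G G1" using st.LA_ex[OF g] by blast
    have g1: "st.good G1" using st.LA_props(2)[OF la] g by simp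
    obtain W where s: "solve VE E pr (opp P) (subH VE E pr P G1 (Suc d)) d q p W"
      using st.IH_app(1)[OF g1] by blast
    obtain R where lb: "loopB VE E pr P (Suc d) p q (G1 - attr VE E (opp P) W G1) W R"
      using st.LB_ex[OF st.rem_good(1)[OF g1]] by blast
    have "solve VE E pr P G (Suc d) p q R"
      using solve_main[of G p VE E pr P "Suc d" q G1 W R] False la s lb by simp
    then show ?thesis by blast
  qed
  have corr: "(\<forall>D. dominion VE E pr P G D \<and> card D \<le> p \<longrightarrow> D \<subseteq> R)
        \<and> (\<forall>D. dominion VE E pr (opp P) G D \<and> card D \<le> q \<longrightarrow> D \<inter> R = {})"
    if sol: "solve VE E pr P G (Suc d) p q R" for R
  proof (cases "G = {} \<or> p \<le> 1")
    case True
    have "R = {}" using sol True by (cases rule: solve.cases) auto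
    moreover have "\<forall>D. dominion VE E pr P G D \<and> card D \<le> p \<longrightarrow> D = {}"
    proof (intro allI impI)
      fix D assume dD: "dominion VE E pr P G D \<and> card D \<le> p"
      show "D = {}"
      proof (cases "G = {}")
        case True then show ?thesis using dD dom_empty by blast
      next
        case False then have "p \<le> 1" using \<open>G = {} \<or> p \<le> 1\<close> by blast
        then show ?thesis using no_small_dom[OF sg] dD by (meson le_trans)
      qed
    qed
    ultimately show ?thesis by blast
  next
    case False
    obtain G1 W where la: "loopA VE E pr P (Suc d) p q G G1"
      and s: "solve VE E pr (opp P) (subH VE E pr P G1 (Suc d)) d q p W"
      and lb: "loopB VE E pr P (Suc d) p q (G1 - attr VE E (opp P) W G1) W R"
      using sol False by (cases rule: solve.cases) auto
    have LA: "st.good G1 \<and> closedP (opp P) G G1 \<and> solve VE E pr (opp P) (subH VE E pr P G1 (Suc d)) d (q div 2) p {}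
     \<and> (\<forall>D. dominion VE E pr P G D \<and> card D \<le> p \<longrightarrow> dominion VE E pr P G1 D)"
      using st.LA_props(2)[OF la] g by simp
    then have g1: "st.good G1" by blast
    have sg1: "subgame V E G1" using g1 st.good_def by simp
    let ?G2 = "G1 - attr VE E (opp P) W G1"
    have g2: "st.good ?G2" using st.rem_good(1)[OF g1] .
    have RG2: "R \<subseteq> ?G2" using solve_subset(3)[OF lb] .
    have part1: "\<forall>D. dominion VE E pr P G D \<and> card D \<le> p \<longrightarrow> D \<subseteq> R"
    proof (intro allI impI)
      fix D assume dD: "dominion VE E pr P G D \<and> card D \<le> p"
      then have "dominion VE E pr P G1 D" using LA by blast
      then have "dominion VE E pr P ?G2 D" using st.iterI[OF g1 s] dD by blast
      then show "D \<subseteq> R" using st.LB_i(3)[OF lb] g2 dD by blast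
    qed
    have part2: "\<forall>D. dominion VE E pr (opp P) G D \<and> card D \<le> q \<longrightarrow> D \<inter> R = {}"
    proof (intro allI impI)
      fix D assume dD: "dominion VE E pr (opp P) G D \<and> card D \<le> q"
      have finD: "finite D" using dom_finite[OF sg] dD by blast
      let ?D1 = "D \<inter> G1"
      have d1: "dominion VE E pr (opp P) G1 ?D1" using dom_trap LA dD by blast
      let ?D2 = "?D1 \<inter> ?G2"
      have d2: "dominion VE E pr (opp P) ?G2 ?D2" using dom_trap[OF st.rem_good(2)[OF g1] d1] .
      have cl: "card ?D2 \<le> q div 2 \<and> (W = {} \<longrightarrow> ?D2 = {})"
      proof (cases "?D1 = {}")
        case True then show ?thesis by simp
      next
        case False
        have pp: "even (Suc d) \<longleftrightarrow> P = Even" using a by simp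
        obtain X where X: "X \<noteq> {}" "X \<subseteq> ?D1" "dominion VE E pr (opp P) (subH VE E pr P G1 (Suc d)) X"
          using key_lemma[OF sg1 _ pp d1 False] g1 unfolding st.good_def by blast
        have finX: "finite X" using X(2) finD by (meson finite_subset inf_le1 order_trans)
        have cX: "card X \<le> card ?D1" using X(2) finD by (simp add: card_mono)
        have cD1: "card ?D1 \<le> q" using dD finD by (meson card_mono inf_le1 le_trans)
        have "X \<subseteq> W" using st.IH_app(2)[OF g1 s X(3)] cX cD1 by simp
        have big: "\<not> card X \<le> q div 2"
        proof
          assume "card X \<le> q div 2"
          then have "X \<subseteq> {}" using st.IH_app(2)[OF g1 _ X(3), of "q div 2" "{}"] LA by blast
          then show False using X(1) by blast
        qed
        have "W \<subseteq> attr VE E (opp P) W G1" using attr_target[OF sg1, of W "opp P"] st.W_sub[OF s] by blast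
        then have "?D2 \<subseteq> ?D1 - X" using \<open>X \<subseteq> W\<close> by blast
        then have "card ?D2 \<le> card (?D1 - X)" using finD by (meson card_mono finite_Diff finite_Int)
        also have "\<dots> = card ?D1 - card X" using X(2) finX by (simp add: card_Diff_subset)
        finally have "card ?D2 \<le> q div 2" using big cD1 by linarith
        moreover have "W \<noteq> {}" using \<open>X \<subseteq> W\<close> X(1) by blast
        ultimately show ?thesis by blast
      qed
      have "?D2 \<inter> R = {}" using st.LB_ii(3)[OF lb] g2 d2 cl by blast
      then show "D \<inter> R = {}" using RG2 by blast
    qed
    show ?thesis using part1 part2 by blast
  qed
  show "(\<exists>R. solve VE E pr P G (Suc d) p q R) \<and>
   (\<forall>R. solve VE E pr P G (Suc d) p q R \<longrightarrow> (\<forall>D. dominion VE E pr P G D \<and> card D \<le> p \<longrightarrow> D \<subseteq> R)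
        \<and> (\<forall>D. dominion VE E pr (opp P) G D \<and> card D \<le> q \<longrightarrow> D \<inter> R = {}))"
    using ex corr by blast
qed

lemma Claim_all: "Claim d"
  by (induction d) (use Claim0 Claim_Suc in auto)

end

theorem lemma4p1:
  fixes V VE :: "'v set" and E :: "('v \<times> 'v) set" and pr :: "'v \<Rightarrow> nat"
    and G :: "'v set" and pE pO d :: nat
  assumes "parity_game V VE E pr"
    and "subgame V E G"
    and "1 \<le> pE" and "1 \<le> pO"
    and "\<forall>v\<in>G. pr v \<le> d"
  shows "(even d \<longrightarrow>
           (\<exists>R. solve VE E pr Even G d pE pO R) \<and>
           (\<forall>R. solve VE E pr Even G d pE pO R \<longrightarrow>
              (\<forall>D. dominion VE E pr Even G D \<and> card D \<le> pE \<longrightarrow> D \<subseteq> R) \<and>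
              (\<forall>D. dominion VE E pr Odd G D \<and> card D \<le> pO \<longrightarrow> D \<inter> R = {})))
       \<and> (odd d \<longrightarrow>
           (\<exists>R. solve VE E pr Odd G d pO pE R) \<and>
           (\<forall>R. solve VE E pr Odd G d pO pE R \<longrightarrow>
              (\<forall>D. dominion VE E pr Odd G D \<and> card D \<le> pO \<longrightarrow> D \<subseteq> R) \<and>
              (\<forall>D. dominion VE E pr Even G D \<and> card D \<le> pE \<longrightarrow> D \<inter> R = {})))"
proof -
  interpret pg V VE E pr by unfold_locales (rule assms(1))
  have C: "\<forall>P G p q. subgame V E G \<and> (\<forall>v\<in>G. pr v \<le> d) \<and> (even d \<longleftrightarrow> P = Even) \<longrightarrow>
   (\<exists>R. solve VE E pr P G d p q R) \<and>
   (\<forall>R. solve VE E pr P G d p q R \<longrightarrow> (\<forall>D. dominion VE E pr P G D \<and> card D \<le> p \<longrightarrow> D \<subseteq> R)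
        \<and> (\<forall>D. dominion VE E pr (opp P) G D \<and> card D \<le> q \<longrightarrow> D \<inter> R = {}))"
    using Claim_all[of d] unfolding Claim_def .
  have c1: "subgame V E G \<and> (\<forall>v\<in>G. pr v \<le> d) \<and> (even d \<longleftrightarrow> Even = Even) \<longrightarrow>
   (\<exists>R. solve VE E pr Even G d pE pO R) \<and>
   (\<forall>R. solve VE E pr Even G d pE pO R \<longrightarrow> (\<forall>D. dominion VE E pr Even G D \<and> card D \<le> pE \<longrightarrow> D \<subseteq> R)
        \<and> (\<forall>D. dominion VE E pr (opp Even) G D \<and> card D \<le> pO \<longrightarrow> D \<inter> R = {}))"
    using C by blast
  have c2: "subgame V E G \<and> (\<forall>v\<in>G. pr v \<le> d) \<and> (even d \<longleftrightarrow> Odd = Even) \<longrightarrow>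
   (\<exists>R. solve VE E pr Odd G d pO pE R) \<and>
   (\<forall>R. solve VE E pr Odd G d pO pE R \<longrightarrow> (\<forall>D. dominion VE E pr Odd G D \<and> card D \<le> pO \<longrightarrow> D \<subseteq> R)
        \<and> (\<forall>D. dominion VE E pr (opp Odd) G D \<and> card D \<le> pE \<longrightarrow> D \<inter> R = {}))"
    using C by blast
  show ?thesis using c1 c2 assms(2,5) by simp
qed

end
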